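(* Let $\beta=(\pi_1,\pi_2)$ be a chainable pair of patterns, and let $\mathcal{M}^\beta$ be the set of complex matrices $\mathbf{A}$ of the same size as matrices in $\mathcal{B}^\beta$ such that $\operatorname{rank}(\mathbf{A}[R_P,C_P])\le r(\pi_1,\pi_2)$ for every $P\in\mathcal{P}(\mathbf{S}_{\pi_1},\mathbf{S}_{\pi_2})$. Then $$\mathcal{B}^\beta=\Sigma^{\pi_1*\pi_2}\cap\mathcal{M}^\beta.$$
   Context: A pattern is a tuple $\pi=(a,b,c,d)$ of positive integers; $\mathbf{S}_\pi:=\mathbf{I}_a\otimes\mathbf{1}_{b\times c}\otimes\mathbf{I}_d\in\{0,1\}^{abd\times acd}$. A $\pi$-factor is a complex $abd\times acd$ matrix with support in that of $\mathbf{S}_\pi$; $\Sigma^\pi$ is the set of $\pi$-factors. Patterns $\pi_1=(a_1,b_1,c_1,d_1),\pi_2=(a_2,b_2,c_2,d_2)$ are chainable if $a_1c_1/a_2=b_2d_2/d_1=:r(\pi_1,\pi_2)$ is an integer, $a_1\mid a_2$, $d_2\mid d_1$; then $\pi_1*\pi_2:=(a_1,b_1d_1/d_2,a_2c_2/a_1,d_2)$. $\mathcal{B}^\beta:=\{\mathbf{X}_1\mathbf{X}_2:\mathbf{X}_i\in\Sigma^{\pi_i}\}$. For binary $\mathbf{L}\in\{0,1\}^{m\times r},\mathbf{R}\in\{0,1\}^{r\times n}$ let $\mathbf{U}_i:=\mathbf{L}[:,i]\mathbf{R}[i,:]$; $\mathcal{P}(\mathbf{L},\mathbf{R})$ is the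 partition of $\{1,\dots,r\}$ into classes of $i\sim j\iff\mathbf{U}_i=\mathbf{U}_j$, and for a class $P$, $R_P\times C_P$ is the support of $\mathbf{U}_i$, $i\in P$. *)

theory Defs
  imports "Jordan_Normal_Form.DL_Rank_Submatrix"
begin

(* Indices are 0-based throughout. A pattern is a 4-tuple (a,b,c,d). *)
type_synonym pattern = "nat \<times> nat \<times> nat \<times> nat"

definition is_pattern :: "pattern \<Rightarrow> bool" where
  "is_pattern \<pi> = (case \<pi> of (a,b,c,d) \<Rightarrow> 0 < a \<and> 0 < b \<and> 0 < c \<and> 0 < d)"

definition kron :: "'a::times mat \<Rightarrow> 'a mat \<Rightarrow> 'a mat" where
  "kron A B = mat (dim_row A * dim_row B) (dim_col A * dim_col B)
     (\<lambda>(i,j). A $$ (i div dim_row B, j div dim_col B) * B $$ (i mod dim_row B, j mod dim_col B))"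

definition ones_mat :: "nat \<Rightarrow> nat \<Rightarrow> 'a::one mat" where
  "ones_mat b c = mat b c (\<lambda>_. 1)"

definition S_pat :: "pattern \<Rightarrow> complex mat" where
  "S_pat \<pi> = (case \<pi> of (a,b,c,d) \<Rightarrow> kron (kron (1\<^sub>m a) (ones_mat b c)) (1\<^sub>m d))"

definition factors :: "pattern \<Rightarrow> complex mat set" where
  "factors \<pi> = (case \<pi> of (a,b,c,d) \<Rightarrow>
     {X. X \<in> carrier_mat (a*b*d) (a*c*d) \<and>
         (\<forall>i<a*b*d. \<forall>j<a*c*d. S_pat \<pi> $$ (i,j) = 0 \<longrightarrow> X $$ (i,j) = 0)})"

definition chainable :: "pattern \<Rightarrow> pattern \<Rightarrow> bool" where
  "chainable \<pi>1 \<pi>2 = (case \<pi>1 of (a1,b1,c1,d1) \<Rightarrow> case \<pi>2 of (a2,b2,c2,d2) \<Rightarrow>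
     (\<exists>r::nat. a1 * c1 = r * a2 \<and> b2 * d2 = r * d1) \<and> a1 dvd a2 \<and> d2 dvd d1)"

(* r(pi1,pi2) = a1 c1 / a2 (meaningful when chainable) *)
definition rpat :: "pattern \<Rightarrow> pattern \<Rightarrow> nat" where
  "rpat \<pi>1 \<pi>2 = (case \<pi>1 of (a1,b1,c1,d1) \<Rightarrow> case \<pi>2 of (a2,b2,c2,d2) \<Rightarrow> a1 * c1 div a2)"

definition star_pat :: "pattern \<Rightarrow> pattern \<Rightarrow> pattern" where
  "star_pat \<pi>1 \<pi>2 = (case \<pi>1 of (a1,b1,c1,d1) \<Rightarrow> case \<pi>2 of (a2,b2,c2,d2) \<Rightarrow>
     (a1, b1 * d1 div d2, a2 * c2 div a1, d2))"

definition butterfly_set :: "pattern \<Rightarrow> pattern \<Rightarrow> complex mat set" where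
  "butterfly_set \<pi>1 \<pi>2 = {X1 * X2 | X1 X2. X1 \<in> factors \<pi>1 \<and> X2 \<in> factors \<pi>2}"

definition rank_one_comp :: "'a::comm_ring_1 mat \<Rightarrow> 'a mat \<Rightarrow> nat \<Rightarrow> 'a mat" where
  "rank_one_comp L R i = mat (dim_row L) (dim_col R) (\<lambda>(k,l). L $$ (k,i) * R $$ (i,l))"

definition comp_partition :: "'a::comm_ring_1 mat \<Rightarrow> 'a mat \<Rightarrow> nat set set" where
  "comp_partition L R = {0..<dim_col L} //
     {(i,j). i < dim_col L \<and> j < dim_col L \<and> rank_one_comp L R i = rank_one_comp L R j}"

definition mat_support :: "'a::zero mat \<Rightarrow> (nat \<times> nat) set" where
  "mat_support M = {(k,l). k < dim_row M \<and> l < dim_col M \<and> M $$ (k,l) \<noteq> 0}"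

definition class_rows :: "'a::comm_ring_1 mat \<Rightarrow> 'a mat \<Rightarrow> nat set \<Rightarrow> nat set" where
  "class_rows L R P = fst ` mat_support (rank_one_comp L R (SOME i. i \<in> P))"

definition class_cols :: "'a::comm_ring_1 mat \<Rightarrow> 'a mat \<Rightarrow> nat set \<Rightarrow> nat set" where
  "class_cols L R P = snd ` mat_support (rank_one_comp L R (SOME i. i \<in> P))"

definition mat_rank :: "complex mat \<Rightarrow> nat" where
  "mat_rank A = vec_space.rank (dim_row A) A"

definition M_set :: "pattern \<Rightarrow> pattern \<Rightarrow> complex mat set" where
  "M_set \<pi>1 \<pi>2 = (case \<pi>1 of (a1,b1,c1,d1) \<Rightarrow> case \<pi>2 of (a2,b2,c2,d2) \<Rightarrow>
     {A. A \<in> carrier_mat (a1*b1*d1) (a2*c2*d2) \<and>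
         (\<forall>P \<in> comp_partition (S_pat \<pi>1) (S_pat \<pi>2).
            mat_rank (submatrix A (class_rows (S_pat \<pi>1) (S_pat \<pi>2) P)
                                  (class_cols (S_pat \<pi>1) (S_pat \<pi>2) P)) \<le> rpat \<pi>1 \<pi>2)})"

end

theory Submission
  imports Defs
begin
lemma rank_sum_outer:
  fixes f g :: "nat \<Rightarrow> nat \<Rightarrow> complex"
  assumes "finite K"
  shows "vec_space.rank m (mat m n (\<lambda>(k,l). \<Sum>i\<in>K. f i k * g i l)) \<le> card K"
  using assms
proof (induction K rule: finite_induct)
  case empty
  have "mat m n (\<lambda>(k,l). \<Sum>i\<in>{}. f i k * g i l) = 0\<^sub>m m n"
    by (rule eq_matI) auto
  show ?case unfolding \<open>mat m n (\<lambda>(k,l). \<Sum>i\<in>{}. f i k * g i l) = 0\<^sub>m m n\<close> vec_space.rank_0I by simp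
next
  case (insert i K)
  have eq: "mat m n (\<lambda>(k,l). \<Sum>i\<in>insert i K. f i k * g i l)
     = mat m n (\<lambda>(k,l). f i k * g i l) + mat m n (\<lambda>(k,l). \<Sum>i\<in>K. f i k * g i l)"
    by (rule eq_matI) (use insert in auto)
  have r1: "vec_space.rank m (mat m n (\<lambda>(k,l). f i k * g i l)) \<le> 1"
    by (rule vec_space.rank_le_1_product_entries[of _ m n "f i" "g i"]) auto
  have "vec_space.rank m (mat m n (\<lambda>(k,l). \<Sum>i\<in>insert i K. f i k * g i l))
     \<le> vec_space.rank m (mat m n (\<lambda>(k,l). f i k * g i l)) + vec_space.rank m (mat m n (\<lambda>(k,l). \<Sum>i\<in>K. f i k * g i l))"
    unfolding eq by (rule vec_space.rank_subadditive) auto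
  then show ?case using r1 insert by simp
qed

lemma mat_rank_sum_outer:
  fixes f g :: "nat \<Rightarrow> nat \<Rightarrow> complex"
  assumes "finite K" and "B \<in> carrier_mat m n"
    and "\<And>k l. k < m \<Longrightarrow> l < n \<Longrightarrow> B $$ (k,l) = (\<Sum>i\<in>K. f i k * g i l)"
  shows "mat_rank B \<le> card K"
proof -
  have "B = mat m n (\<lambda>(k,l). \<Sum>i\<in>K. f i k * g i l)"
    by (rule eq_matI) (use assms in auto)
  then show ?thesis unfolding mat_rank_def using rank_sum_outer[OF assms(1)] assms(2) by simp
qed
lemma (in vec_space) rank_factor:
  assumes A: "A \<in> carrier_mat n nc" and r: "rank A \<le> r"
  shows "\<exists>L R. L \<in> carrier_mat n r \<and> R \<in> carrier_mat r nc \<and> A = L * R"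
proof -
  obtain S where max: "maximal S (\<lambda>T. T \<subseteq> set (cols A) \<and> lin_indpt T)"
    using maximal_exists[of "(\<lambda>T. T \<subseteq> set (cols A) \<and> lin_indpt T)" "card (set (cols A))" "{}"]
    by (meson List.finite_set card_mono empty_iff empty_subsetI finite_lin_indpt2 rev_finite_subset)
  have cardS: "card S = rank A" using rank_card_indpt[OF A max] by simp
  have SU: "S \<subseteq> set (cols A)" and liS: "lin_indpt S" using max unfolding maximal_def by auto
  have colsC: "set (cols A) \<subseteq> carrier_vec n" using A cols_dim by blast
  have finS: "finite S" using SU finite_subset by blast
  have SC: "S \<subseteq> carrier_vec n" using SU colsC by blast
  have inspan: "set (cols A) \<subseteq> span S"
  proof (rule ccontr)
    assume "\<not> set (cols A) \<subseteq> span S"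
    then obtain s where "s\<in>set (cols A)" "s \<notin> span S" by blast
    then have "lin_indpt (S\<union>{s})" using lindep_span
      by (meson SU liS colsC lin_dep_iff_in_span rev_subsetD span_mem subset_trans)
    have "s\<notin>S" using SC \<open>s \<notin> span S\<close> span_mem by auto
    then have "(S\<union>{s}) \<subseteq> set (cols A) \<and> lin_indpt (S\<union>{s})" using SU \<open>lin_indpt (S \<union> {s})\<close> \<open>s \<in> set (cols A)\<close> by auto
    then have "\<not>maximal S (\<lambda>T. T \<subseteq> set (cols A) \<and> lin_indpt T)"
      unfolding maximal_def using Un_subset_iff \<open>s \<notin> S\<close> insert_subset order_refl by auto
    then show False using max by metis
  qed
  obtain ws where ws: "distinct ws" "set ws = S" using finite_distinct_list[OF finS] by metis
  define s where "s = length ws"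
  have s_le: "s \<le> r" using cardS r ws distinct_card s_def by metis
  have wsC: "set ws \<subseteq> carrier_vec n" using ws SC by simp
  have "\<forall>j. \<exists>c. j < nc \<longrightarrow> col A j = mat_of_cols n ws *\<^sub>v vec s c"
  proof (intro allI)
    fix j
    show "\<exists>c. j < nc \<longrightarrow> col A j = mat_of_cols n ws *\<^sub>v vec s c"
    proof (cases "j < nc")
      case True
      have "col A j \<in> set (cols A)" using True A by (simp add: cols_def)
      then have "col A j \<in> span_list ws" using inspan span_list_as_span[OF wsC] ws by auto
      then obtain c where "col A j = lincomb_list c ws" unfolding span_list_def by auto
      also have "\<dots> = mat_of_cols n ws *\<^sub>v vec s c"
        unfolding s_def by (rule lincomb_list_as_mat_mult) (use wsC in auto)
      finally show ?thesis by blast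
    qed auto
  qed
  then obtain cf where cf: "\<And>j. j < nc \<Longrightarrow> col A j = mat_of_cols n ws *\<^sub>v vec s (cf j)" by metis
  define L where "L = mat n r (\<lambda>(i,k). if k < s then ws ! k $ i else 0)"
  define R where "R = mat r nc (\<lambda>(k,j). if k < s then cf j k else 0)"
  have "A = L * R"
  proof (rule eq_matI)
    fix i j assume i: "i < dim_row (L * R)" and j: "j < dim_col (L * R)"
    then have i': "i < n" and j': "j < nc" by (auto simp: L_def R_def)
    have "(L * R) $$ (i,j) = (\<Sum>k = 0..<r. L $$ (i,k) * R $$ (k,j))"
      using i' j' by (simp add: L_def R_def scalar_prod_def)
    also have "\<dots> = (\<Sum>k = 0..<r. if k < s then ws ! k $ i * cf j k else 0)"
      by (rule sum.cong) (use i' j' in \<open>auto simp: L_def R_def\<close>)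
    also have "\<dots> = (\<Sum>k = 0..<s. ws ! k $ i * cf j k)"
      by (rule sum.mono_neutral_cong_right) (use s_le in auto)
    also have "\<dots> = (mat_of_cols n ws *\<^sub>v vec s (cf j)) $ i"
      using i' by (simp add: mat_of_cols_def scalar_prod_def s_def)
    also have "\<dots> = A $$ (i,j)" using cf[OF j'] i' j' A by (metis carrier_matD(1) col_def index_vec)
    finally show "A $$ (i,j) = (L * R) $$ (i,j)" by simp
  qed (use A in \<open>auto simp: L_def R_def\<close>)
  moreover have "L \<in> carrier_mat n r" "R \<in> carrier_mat r nc" by (auto simp: L_def R_def)
  ultimately show ?thesis by blast
qed
lemma card_less_sub:
  fixes x N :: nat and I :: "nat set"
  assumes "x \<in> I" "x < N"
  shows "card {a\<in>I. a < x} < card {i. i < N \<and> i \<in> I}"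
proof (rule psubset_card_mono)
  show "finite {i. i < N \<and> i \<in> I}" by simp
  have "{a\<in>I. a < x} \<subseteq> {i. i < N \<and> i \<in> I}" using assms(2) by auto
  moreover have "x \<in> {i. i < N \<and> i \<in> I}" "x \<notin> {a\<in>I. a < x}" using assms by auto
  ultimately show "{a\<in>I. a < x} \<subset> {i. i < N \<and> i \<in> I}" by blast
qed

lemma block_factor:
  assumes "mat_rank (submatrix A I J) \<le> r"
  shows "\<exists>f g. \<forall>x\<in>I. \<forall>y\<in>J. x < dim_row A \<longrightarrow> y < dim_col A \<longrightarrow>
            A $$ (x,y) = (\<Sum>q = 0..<r. f x q * g q y)"
proof -
  define B where "B = submatrix A I J"
  have B: "B \<in> carrier_mat (dim_row B) (dim_col B)" by simp
  have rk: "vec_space.rank (dim_row B) B \<le> r" using assms unfolding mat_rank_def B_def .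
  obtain L R where LR: "L \<in> carrier_mat (dim_row B) r" "R \<in> carrier_mat r (dim_col B)" "B = L * R"
    using vec_space.rank_factor[OF B rk] by blast
  define f where "f x q = L $$ (card {a\<in>I. a < x}, q)" for x q
  define g where "g q y = R $$ (q, card {a\<in>J. a < y})" for q y
  show ?thesis
  proof (intro exI ballI impI)
    fix x y assume x: "x \<in> I" and y: "y \<in> J" and xl: "x < dim_row A" and yl: "y < dim_col A"
    let ?cx = "card {a\<in>I. a < x}" and ?cy = "card {a\<in>J. a < y}"
    have cx': "?cx < card {i. i < dim_row A \<and> i \<in> I}" using card_less_sub[OF x xl] .
    have cy': "?cy < card {i. i < dim_col A \<and> i \<in> J}" using card_less_sub[OF y yl] .
    have cx: "?cx < dim_row B" unfolding B_def dim_submatrix by (rule cx')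
    have cy: "?cy < dim_col B" unfolding B_def dim_submatrix by (rule cy')
    have "B $$ (?cx, ?cy) = A $$ (x,y)"
    proof -
      have "B $$ (?cx, ?cy) = A $$ (pick I ?cx, pick J ?cy)"
        unfolding B_def submatrix_def by (subst index_mat[OF cx' cy']) simp
      then show ?thesis by (simp only: pick_card_in_set[OF x] pick_card_in_set[OF y])
    qed
    moreover have "B $$ (?cx, ?cy) = (\<Sum>q = 0..<r. f x q * g q y)"
    proof -
      have "B $$ (?cx, ?cy) = (L * R) $$ (?cx, ?cy)" using LR(3) by simp
      also have "\<dots> = row L ?cx \<bullet> col R ?cy"
        by (rule index_mult_mat) (use cx cy LR(1,2) in auto)
      also have "\<dots> = (\<Sum>q = 0..<r. f x q * g q y)"
        using cx cy LR(1,2) by (simp add: f_def g_def scalar_prod_def)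
      finally show ?thesis .
    qed
    ultimately show "A $$ (x,y) = (\<Sum>q = 0..<r. f x q * g q y)" by simp
  qed
qed
lemma arith_A1:
  fixes x j y b1 m d2 r k c2 :: nat
  assumes "x div (b1*(m*d2)) = j div (r*k*(m*d2))" "x mod (m*d2) = j mod (m*d2)"
    "j div (r*m*d2) = y div (c2*d2)" "j mod d2 = y mod d2"
  shows "x div (b1*m*d2) = y div (k*c2*d2) \<and> x mod d2 = y mod d2"
proof
  have "x div (b1*m*d2) = j div (r*k*(m*d2))" using assms(1) by (simp add: ac_simps)
  also have "\<dots> = j div (r*m*d2) div k" by (simp add: div_mult2_eq[symmetric] ac_simps)
  also have "\<dots> = y div (c2*d2) div k" using assms(3) by simp
  also have "\<dots> = y div (k*c2*d2)" by (simp add: div_mult2_eq[symmetric] ac_simps)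
  finally show "x div (b1*m*d2) = y div (k*c2*d2)" .
  have "x mod d2 = x mod (m*d2) mod d2" by (simp add: mod_mod_cancel)
  also have "\<dots> = j mod (m*d2) mod d2" using assms(2) by simp
  also have "\<dots> = j mod d2" by (simp add: mod_mod_cancel)
  finally show "x mod d2 = y mod d2" using assms(4) by simp
qed

lemma arith_decomp:
  fixes j r m d2 :: nat
  shows "j = (j div (r*m*d2))*(r*m*d2) + ((j mod (r*m*d2)) div (m*d2))*(m*d2) + j mod (m*d2)"
proof -
  have "j mod (r*m*d2) mod (m*d2) = j mod (m*d2)" by (simp add: mod_mod_cancel)
  then have "j mod (r*m*d2) = ((j mod (r*m*d2)) div (m*d2))*(m*d2) + j mod (m*d2)"
    by (metis div_mult_mod_eq)
  then show ?thesis by (metis add.assoc div_mult_mod_eq)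
qed

lemma arith_q_lt:
  fixes j r m d2 :: nat
  assumes "0 < r" "0 < m" "0 < d2"
  shows "(j mod (r*m*d2)) div (m*d2) < r"
proof -
  have "j mod (r*m*d2) < r*m*d2" using assms by simp
  then have "j mod (r*m*d2) < r*(m*d2)" by (simp add: ac_simps)
  then show ?thesis using assms by (simp add: div_less_iff_less_mult)
qed

lemma arith_build:
  fixes x y q r m d2 b1 k c2 :: nat
  assumes pos: "0 < r" "0 < m" "0 < d2" "0 < k" "0 < c2"
    and q: "q < r"
    and st: "x div (b1*m*d2) = y div (k*c2*d2)" "x mod d2 = y mod d2"
  defines "j \<equiv> (y div (c2*d2))*(r*m*d2) + q*(m*d2) + x mod (m*d2)"
  shows "x div (b1*(m*d2)) = j div (r*k*(m*d2)) \<and> x mod (m*d2) = j mod (m*d2) \<and>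
         j div (r*m*d2) = y div (c2*d2) \<and> j mod d2 = y mod d2"
proof -
  have lt: "q*(m*d2) + x mod (m*d2) < r*m*d2"
  proof -
    have "x mod (m*d2) < m*d2" using pos by simp
    moreover have "q*(m*d2) + m*d2 \<le> r*(m*d2)" using q
      by (metis add.commute mult.commute mult_Suc_right mult_le_mono2 Suc_leI)
    ultimately show ?thesis by (simp add: ac_simps)
  qed
  have jd: "j div (r*m*d2) = y div (c2*d2)"
    unfolding j_def using lt pos by (simp add: add.assoc)
  have jm: "j mod (m*d2) = x mod (m*d2)"
  proof -
    have "j = ((y div (c2*d2))*r + q)*(m*d2) + x mod (m*d2)" unfolding j_def
      by (simp add: algebra_simps)
    then show ?thesis by simp
  qed
  have "j div (r*k*(m*d2)) = j div (r*m*d2) div k" by (simp add: div_mult2_eq[symmetric] ac_simps)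
  also have "\<dots> = y div (c2*d2) div k" using jd by simp
  also have "\<dots> = y div (k*c2*d2)" by (simp add: div_mult2_eq[symmetric] ac_simps)
  also have "\<dots> = x div (b1*(m*d2))" using st(1) by (simp add: ac_simps)
  finally have 1: "x div (b1*(m*d2)) = j div (r*k*(m*d2))" by simp
  have "j mod d2 = j mod (m*d2) mod d2" by (simp add: mod_mod_cancel)
  also have "\<dots> = x mod (m*d2) mod d2" using jm by simp
  also have "\<dots> = x mod d2" by (simp add: mod_mod_cancel)
  finally have 2: "j mod d2 = y mod d2" using st(2) by simp
  show ?thesis using 1 2 jd jm by simp
qed
lemma ones_mat_dims[simp]: "dim_row (ones_mat b c) = b" "dim_col (ones_mat b c) = c"
  unfolding ones_mat_def by simp_all

lemma ones_mat_index[simp]: "i < b \<Longrightarrow> j < c \<Longrightarrow> ones_mat b c $$ (i,j) = 1"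
  unfolding ones_mat_def by simp

lemma kron_dims[simp]: "dim_row (kron A B) = dim_row A * dim_row B" "dim_col (kron A B) = dim_col A * dim_col B"
  unfolding kron_def by simp_all

lemma kron_index:
  assumes "i < dim_row A * dim_row B" "j < dim_col A * dim_col B"
  shows "kron A B $$ (i,j) = A $$ (i div dim_row B, j div dim_col B) * B $$ (i mod dim_row B, j mod dim_col B)"
  unfolding kron_def by (simp only: index_mat[OF assms] prod.case)

lemma S_pat_carrier: "S_pat (a,b,c,d) \<in> carrier_mat (a*b*d) (a*c*d)"
  unfolding S_pat_def carrier_mat_def by (simp add: mult.assoc)

lemma S_pat_index:
  assumes pos: "0 < b" "0 < c" "0 < d" and x: "x < a*b*d" and y: "y < a*c*d"
  shows "S_pat (a,b,c,d) $$ (x,y) = (if x div (b*d) = y div (c*d) \<and> x mod d = y mod d then 1 else 0)"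
proof -
  let ?K = "kron (1\<^sub>m a) (ones_mat b c :: complex mat)"
  have dK: "dim_row ?K = a*b" "dim_col ?K = a*c" by (simp_all add: ones_mat_def)
  have xd: "x div d < a*b" using x pos by (simp add: div_less_iff_less_mult ac_simps)
  have yd: "y div d < a*c" using y pos by (simp add: div_less_iff_less_mult ac_simps)
  have "S_pat (a,b,c,d) $$ (x,y) = ?K $$ (x div d, y div d) * (1\<^sub>m d) $$ (x mod d, y mod d)"
  proof -
    have "x < dim_row ?K * dim_row (1\<^sub>m d :: complex mat)" using x dK by (simp add: ac_simps)
    moreover have "y < dim_col ?K * dim_col (1\<^sub>m d :: complex mat)" using y dK by (simp add: ac_simps)
    ultimately show ?thesis unfolding S_pat_def by (simp only: kron_index prod.case) simp
  qed
  also have "?K $$ (x div d, y div d) = (1\<^sub>m a :: complex mat) $$ (x div d div b, y div d div c) * 1"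
  proof -
    have "x div d div b < a" using xd pos by (simp add: div_less_iff_less_mult ac_simps)
    moreover have "y div d div c < a" using yd pos by (simp add: div_less_iff_less_mult ac_simps)
    ultimately show ?thesis using xd yd pos by (simp add: kron_index ones_mat_def)
  qed
  also have "(1\<^sub>m a :: complex mat) $$ (x div d div b, y div d div c) = (if x div d div b = y div d div c then 1 else 0)"
  proof -
    have "x div d div b < a" using xd pos by (simp add: div_less_iff_less_mult ac_simps)
    moreover have "y div d div c < a" using yd pos by (simp add: div_less_iff_less_mult ac_simps)
    ultimately show ?thesis by simp
  qed
  also have "(1\<^sub>m d :: complex mat) $$ (x mod d, y mod d) = (if x mod d = y mod d then 1 else 0)"
    using pos by simp
  finally have "S_pat (a,b,c,d) $$ (x,y) = (if x div d div b = y div d div c then 1 else 0) * (if x mod d = y mod d then 1 else 0)" by simp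
  moreover have "x div (b*d) = x div d div b" "y div (c*d) = y div d div c" by (metis div_mult2_eq mult.commute)+
  ultimately show ?thesis by simp
qed

lemma aux_divq: fixes q M d :: nat assumes "d < M" shows "(q*M + d) div M = q"
  using assms by simp

lemma arith_q_recover:
  fixes al q d r m d2 :: nat
  assumes "q < r" "d < m*d2"
  shows "((al*(r*m*d2) + q*(m*d2) + d) mod (r*m*d2)) div (m*d2) = q"
proof -
  have lt: "q*(m*d2) + d < r*m*d2"
  proof -
    have "q*(m*d2) + m*d2 \<le> r*(m*d2)" using assms(1)
      by (metis add.commute mult.commute mult_Suc_right mult_le_mono2 Suc_leI)
    then show ?thesis using assms(2) by (simp add: ac_simps)
  qed
  have "(al*(r*m*d2) + q*(m*d2) + d) mod (r*m*d2) = q*(m*d2) + d"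
    using lt by (simp add: add.assoc)
  then show ?thesis using aux_divq[OF assms(2)] by simp
qed

lemma factors_iff:
  assumes "0 < b" "0 < c" "0 < d"
  shows "X \<in> factors (a,b,c,d) \<longleftrightarrow> X \<in> carrier_mat (a*b*d) (a*c*d) \<and>
     (\<forall>i<a*b*d. \<forall>j<a*c*d. \<not> (i div (b*d) = j div (c*d) \<and> i mod d = j mod d) \<longrightarrow> X $$ (i,j) = 0)"
  unfolding factors_def using S_pat_index[OF assms] by auto

lemma emb_lt:
  fixes al A q r d M :: nat
  assumes "al < A" "q < r" "d < M"
  shows "al*(r*M) + q*M + d < A*(r*M)"
proof -
  have "q*M + M \<le> r*M" using assms(2)
    by (metis add.commute mult_Suc mult_le_mono1 Suc_leI)
  then have "q*M + d < r*M" using assms(3) by simp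
  moreover have "al*(r*M) + r*M \<le> A*(r*M)" using assms(1)
    by (metis add.commute mult_Suc mult_le_mono1 Suc_leI)
  ultimately show ?thesis by simp
qed

lemma main_sub:
  fixes a1 b1 c2 d2 k r m :: nat
  assumes pos: "0<a1" "0<b1" "0<c2" "0<d2" "0<k" "0<r" "0<m"
  shows "butterfly_set (a1, b1, r*k, m*d2) (a1*k, r*m, c2, d2) =
         factors (star_pat (a1, b1, r*k, m*d2) (a1*k, r*m, c2, d2)) \<inter> M_set (a1, b1, r*k, m*d2) (a1*k, r*m, c2, d2)"
proof -
  define \<pi>1 where "\<pi>1 = (a1, b1, r*k, m*d2)"
  define \<pi>2 where "\<pi>2 = (a1*k, r*m, c2, d2)"
  define R1 where "R1 = a1*b1*(m*d2)"
  define N where "N = a1*(r*k)*(m*d2)"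
  define C2 where "C2 = a1*k*c2*d2"
  have N2: "a1*k*(r*m)*d2 = N" by (simp add: N_def ac_simps)
  define rel1 where "rel1 x j \<longleftrightarrow> x div (b1*(m*d2)) = j div (r*k*(m*d2)) \<and> x mod (m*d2) = j mod (m*d2)" for x j :: nat
  define rel2 where "rel2 j y \<longleftrightarrow> j div (r*m*d2) = y div (c2*d2) \<and> j mod d2 = y mod d2" for j y :: nat
  define relS where "relS x y \<longleftrightarrow> x div (b1*m*d2) = y div (k*c2*d2) \<and> x mod d2 = y mod d2" for x y :: nat
  have star: "star_pat \<pi>1 \<pi>2 = (a1, b1*m, k*c2, d2)"
    unfolding star_pat_def \<pi>1_def \<pi>2_def using pos by (simp add: ac_simps)
  have rp: "rpat \<pi>1 \<pi>2 = r"
    unfolding rpat_def \<pi>1_def \<pi>2_def using pos by (simp add: ac_simps)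
  have fac1: "X \<in> factors \<pi>1 \<longleftrightarrow> X \<in> carrier_mat R1 N \<and> (\<forall>x<R1. \<forall>j<N. \<not> rel1 x j \<longrightarrow> X $$ (x,j) = 0)" for X
    unfolding \<pi>1_def R1_def N_def rel1_def using factors_iff[of b1 "r*k" "m*d2" X a1] pos by simp
  have fac2: "X \<in> factors \<pi>2 \<longleftrightarrow> X \<in> carrier_mat N C2 \<and> (\<forall>j<N. \<forall>y<C2. \<not> rel2 j y \<longrightarrow> X $$ (j,y) = 0)" for X
    unfolding \<pi>2_def C2_def N2[symmetric] rel2_def using factors_iff[of "r*m" c2 d2 X "a1*k"] pos by simp
  have facS: "X \<in> factors (star_pat \<pi>1 \<pi>2) \<longleftrightarrow> X \<in> carrier_mat R1 C2 \<and> (\<forall>x<R1. \<forall>y<C2. \<not> relS x y \<longrightarrow> X $$ (x,y) = 0)" for X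
  proof -
    have "R1 = a1*(b1*m)*d2" "C2 = a1*(k*c2)*d2" by (simp_all add: R1_def C2_def ac_simps)
    then show ?thesis unfolding star relS_def using factors_iff[of "b1*m" "k*c2" d2 X a1] pos by simp
  qed
  define S1 where "S1 = S_pat \<pi>1"
  define S2 where "S2 = S_pat \<pi>2"
  have S1C: "S1 \<in> carrier_mat R1 N" unfolding S1_def \<pi>1_def R1_def N_def by (rule S_pat_carrier)
  have S2C: "S2 \<in> carrier_mat N C2" unfolding S2_def \<pi>2_def C2_def N2[symmetric] by (rule S_pat_carrier)
  have S1I: "S1 $$ (x,j) = (if rel1 x j then 1 else 0)" if "x < R1" "j < N" for x j
    unfolding S1_def \<pi>1_def rel1_def using S_pat_index[of b1 "r*k" "m*d2" x a1 j] pos that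
    by (simp add: R1_def N_def)
  have S2I: "S2 $$ (j,y) = (if rel2 j y then 1 else 0)" if "j < N" "y < C2" for j y
    unfolding S2_def \<pi>2_def rel2_def using S_pat_index[of "r*m" c2 d2 j "a1*k" y] pos that
    by (simp add: C2_def N2)
  define U where "U i = rank_one_comp S1 S2 i" for i
  have UC: "U i \<in> carrier_mat R1 C2" for i
    unfolding U_def rank_one_comp_def using S1C S2C by auto
  have UI: "U i $$ (x,y) = (if rel1 x i \<and> rel2 i y then 1 else 0)" if "x < R1" "y < C2" "i < N" for i x y
    unfolding U_def rank_one_comp_def using S1C S2C that by (simp add: S1I S2I)
  define E where "E = {(i,j). i < N \<and> j < N \<and> U i = U j}"
  have part: "comp_partition S1 S2 = {0..<N} // E"
    unfolding comp_partition_def E_def U_def using S1C by simp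
  define RS where "RS P = fst ` mat_support (U (SOME i. i \<in> P))" for P
  define CS where "CS P = snd ` mat_support (U (SOME i. i \<in> P))" for P
  have Mset: "M_set \<pi>1 \<pi>2 = {A. A \<in> carrier_mat R1 C2 \<and> (\<forall>P \<in> {0..<N} // E. mat_rank (submatrix A (RS P) (CS P)) \<le> r)}"
  proof -
    have "class_rows S1 S2 P = RS P" "class_cols S1 S2 P = CS P" for P
      unfolding class_rows_def class_cols_def RS_def CS_def U_def by simp_all
    then show ?thesis unfolding M_set_def rp[symmetric] part[symmetric] S1_def[symmetric] S2_def[symmetric]
      unfolding \<pi>1_def \<pi>2_def R1_def C2_def by simp
  qed
  have classI: "P \<in> {0..<N} // E \<Longrightarrow> \<exists>j0<N. P = E `` {j0} \<and> (SOME i. i \<in> P) \<in> P \<and> (SOME i. i \<in> P) < N \<and> U (SOME i. i \<in> P) = U j0" for P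
  proof -
    assume "P \<in> {0..<N} // E"
    then obtain j0 where j0: "j0 < N" "P = E `` {j0}" unfolding quotient_def by auto
    then have "j0 \<in> P" unfolding E_def by auto
    then have "(SOME i. i \<in> P) \<in> P" by (rule someI)
    then show ?thesis using j0 unfolding E_def by auto
  qed
  have fwd: "butterfly_set \<pi>1 \<pi>2 \<subseteq> factors (star_pat \<pi>1 \<pi>2) \<inter> M_set \<pi>1 \<pi>2"
  proof
    fix A assume "A \<in> butterfly_set \<pi>1 \<pi>2"
    then obtain X1 X2 where A: "A = X1 * X2" and X1: "X1 \<in> factors \<pi>1" and X2: "X2 \<in> factors \<pi>2"
      unfolding butterfly_set_def by auto
    have X1C: "X1 \<in> carrier_mat R1 N" and X1Z: "\<And>x j. x<R1 \<Longrightarrow> j<N \<Longrightarrow> \<not> rel1 x j \<Longrightarrow> X1 $$ (x,j) = 0"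
      using X1 fac1 by auto
    have X2C: "X2 \<in> carrier_mat N C2" and X2Z: "\<And>j y. j<N \<Longrightarrow> y<C2 \<Longrightarrow> \<not> rel2 j y \<Longrightarrow> X2 $$ (j,y) = 0"
      using X2 fac2 by auto
    have AC: "A \<in> carrier_mat R1 C2" using A X1C X2C by simp
    have AI: "A $$ (x,y) = (\<Sum>j=0..<N. X1 $$ (x,j) * X2 $$ (j,y))" if "x<R1" "y<C2" for x y
      using that A X1C X2C by (simp add: scalar_prod_def)
    have nz: "rel1 x j \<and> rel2 j y" if "x<R1" "y<C2" "j<N" "X1 $$ (x,j) * X2 $$ (j,y) \<noteq> 0" for x y j
      using X1Z X2Z that by force
    have "A \<in> factors (star_pat \<pi>1 \<pi>2)"
      unfolding facS
    proof (intro conjI allI impI AC)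
      fix x y assume xy: "x<R1" "y<C2" "\<not> relS x y"
      have "X1 $$ (x,j) * X2 $$ (j,y) = 0" if "j \<in> {0..<N}" for j
      proof (rule ccontr)
        assume "X1 $$ (x,j) * X2 $$ (j,y) \<noteq> 0"
        then have "rel1 x j \<and> rel2 j y" using nz xy that by auto
        then have "relS x y" using arith_A1 unfolding rel1_def rel2_def relS_def by blast
        then show False using xy by simp
      qed
      then have "(\<Sum>j=0..<N. X1 $$ (x,j) * X2 $$ (j,y)) = 0" by (intro sum.neutral) blast
      then show "A $$ (x,y) = 0" using AI xy by simp
    qed
    moreover have "A \<in> M_set \<pi>1 \<pi>2"
      unfolding Mset
    proof (intro CollectI conjI ballI AC)
      fix P assume P: "P \<in> {0..<N} // E"
      define i0 where "i0 = (SOME i. i \<in> P)"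
      have i0N: "i0 < N" using classI[OF P] unfolding i0_def by blast
      define K where "K = {j. j < N \<and> j div (r*m*d2) = i0 div (r*m*d2) \<and> j mod (m*d2) = i0 mod (m*d2)}"
      have RSrel: "x < R1 \<and> rel1 x i0" if "x \<in> RS P" for x
      proof -
        have "x \<in> fst ` mat_support (U i0)" using that unfolding RS_def i0_def .
        then obtain y where "(x,y) \<in> mat_support (U i0)" by force
        then have "x < R1" "y < C2" "U i0 $$ (x,y) \<noteq> 0" unfolding mat_support_def using UC[of i0] by auto
        then show ?thesis using UI[of x y i0] i0N by (auto split: if_splits)
      qed
      have CSrel: "y < C2 \<and> rel2 i0 y" if "y \<in> CS P" for y
      proof -
        have "y \<in> snd ` mat_support (U i0)" using that unfolding CS_def i0_def .
        then obtain x where "(x,y) \<in> mat_support (U i0)" by force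
        then have "x < R1" "y < C2" "U i0 $$ (x,y) \<noteq> 0" unfolding mat_support_def using UC[of i0] by auto
        then show ?thesis using UI[of x y i0] i0N by (auto split: if_splits)
      qed
      have blk: "A $$ (x,y) = (\<Sum>j\<in>K. X1 $$ (x,j) * X2 $$ (j,y))" if x: "x \<in> RS P" and y: "y \<in> CS P" for x y
      proof -
        have x': "x < R1" "rel1 x i0" using RSrel[OF x] by auto
        have y': "y < C2" "rel2 i0 y" using CSrel[OF y] by auto
        have "(\<Sum>j=0..<N. X1 $$ (x,j) * X2 $$ (j,y)) = (\<Sum>j\<in>K. X1 $$ (x,j) * X2 $$ (j,y))"
        proof (rule sum.mono_neutral_right)
          show "finite {0..<N}" by simp
          show "K \<subseteq> {0..<N}" unfolding K_def by auto
          show "\<forall>j\<in>{0..<N} - K. X1 $$ (x,j) * X2 $$ (j,y) = 0"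
          proof
            fix j assume j: "j \<in> {0..<N} - K"
            show "X1 $$ (x,j) * X2 $$ (j,y) = 0"
            proof (rule ccontr)
              assume "X1 $$ (x,j) * X2 $$ (j,y) \<noteq> 0"
              then have "rel1 x j \<and> rel2 j y" using nz x' y' j by auto
              then have "j \<in> K" using x' y' j unfolding K_def rel1_def rel2_def by auto
              then show False using j by simp
            qed
          qed
        qed
        then show ?thesis using AI x' y' by simp
      qed
      have RSsub: "{i. i < dim_row A \<and> i \<in> RS P} = RS P" using RSrel AC by auto
      have CSsub: "{i. i < dim_col A \<and> i \<in> CS P} = CS P" using CSrel AC by auto
      have finRS: "finite (RS P)" by (rule finite_subset[of _ "{..<R1}"]) (use RSrel in auto)
      have finCS: "finite (CS P)" by (rule finite_subset[of _ "{..<C2}"]) (use CSrel in auto)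
      define B where "B = submatrix A (RS P) (CS P)"
      have dB: "dim_row B = card (RS P)" "dim_col B = card (CS P)"
        unfolding B_def dim_submatrix RSsub CSsub by simp_all
      have "mat_rank B \<le> card K"
      proof (rule mat_rank_sum_outer[where f = "\<lambda>j kk. X1 $$ (pick (RS P) kk, j)" and g = "\<lambda>j l. X2 $$ (j, pick (CS P) l)"])
        show "finite K" unfolding K_def by simp
        show "B \<in> carrier_mat (dim_row B) (dim_col B)" by simp
        fix kk l assume kk: "kk < dim_row B" and l: "l < dim_col B"
        have pk: "pick (RS P) kk \<in> RS P" using kk dB pick_in_set by metis
        have pl: "pick (CS P) l \<in> CS P" using l dB pick_in_set by metis
        have kk': "kk < card {i. i < dim_row A \<and> i \<in> RS P}" using kk dB RSsub by simp
        have l': "l < card {i. i < dim_col A \<and> i \<in> CS P}" using l dB CSsub by simp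
        have "B $$ (kk,l) = A $$ (pick (RS P) kk, pick (CS P) l)"
          unfolding B_def submatrix_def by (subst index_mat[OF kk' l']) simp
        also have "\<dots> = (\<Sum>j\<in>K. X1 $$ (pick (RS P) kk, j) * X2 $$ (j, pick (CS P) l))"
          by (rule blk[OF pk pl])
        finally show "B $$ (kk,l) = (\<Sum>j\<in>K. X1 $$ (pick (RS P) kk, j) * X2 $$ (j, pick (CS P) l))" .
      qed
      also have "card K \<le> r"
      proof -
        have "card K \<le> card {0..<r}"
        proof (rule card_inj_on_le[where f = "\<lambda>j. (j mod (r*m*d2)) div (m*d2)"])
          show "inj_on (\<lambda>j. (j mod (r*m*d2)) div (m*d2)) K"
          proof (rule inj_onI)
            fix j j' assume "j \<in> K" "j' \<in> K" and eq: "(j mod (r*m*d2)) div (m*d2) = (j' mod (r*m*d2)) div (m*d2)"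
            then have "j div (r*m*d2) = j' div (r*m*d2)" "j mod (m*d2) = j' mod (m*d2)" unfolding K_def by auto
            then show "j = j'" using arith_decomp[of j r m d2] arith_decomp[of j' r m d2] eq by simp
          qed
          show "(\<lambda>j. (j mod (r*m*d2)) div (m*d2)) ` K \<subseteq> {0..<r}" using arith_q_lt pos by auto
          show "finite {0..<r}" by simp
        qed
        then show ?thesis by simp
      qed
      finally show "mat_rank (submatrix A (RS P) (CS P)) \<le> r" unfolding B_def .
    qed
    ultimately show "A \<in> factors (star_pat \<pi>1 \<pi>2) \<inter> M_set \<pi>1 \<pi>2" by blast
  qed
  have bwd: "factors (star_pat \<pi>1 \<pi>2) \<inter> M_set \<pi>1 \<pi>2 \<subseteq> butterfly_set \<pi>1 \<pi>2"
  proof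
    fix A assume "A \<in> factors (star_pat \<pi>1 \<pi>2) \<inter> M_set \<pi>1 \<pi>2"
    then have AC: "A \<in> carrier_mat R1 C2" and AZ: "\<And>x y. x<R1 \<Longrightarrow> y<C2 \<Longrightarrow> \<not> relS x y \<Longrightarrow> A $$ (x,y) = 0"
      and Ark: "\<And>P. P \<in> {0..<N}//E \<Longrightarrow> mat_rank (submatrix A (RS P) (CS P)) \<le> r"
      using facS Mset by auto
    define cls where "cls al d = E `` {al*(r*m*d2) + d}" for al d
    have j0N: "al*(r*m*d2) + d < N" if "al < a1*k" "d < m*d2" for al d
    proof -
      have "al*(r*(m*d2)) + 0*(m*d2) + d < (a1*k)*(r*(m*d2))" using emb_lt[OF that(1) pos(6) that(2)] .
      then show ?thesis by (simp add: N_def ac_simps)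
    qed
    have ex: "\<forall>p. \<exists>fg. fst p < a1*k \<longrightarrow> snd p < m*d2 \<longrightarrow>
       (\<forall>x\<in>RS (cls (fst p) (snd p)). \<forall>y\<in>CS (cls (fst p) (snd p)). x < dim_row A \<longrightarrow> y < dim_col A \<longrightarrow>
          A $$ (x,y) = (\<Sum>q=0..<r. fst fg x q * snd fg q y))"
    proof
      fix p :: "nat \<times> nat"
      show "\<exists>fg. fst p < a1*k \<longrightarrow> snd p < m*d2 \<longrightarrow>
       (\<forall>x\<in>RS (cls (fst p) (snd p)). \<forall>y\<in>CS (cls (fst p) (snd p)). x < dim_row A \<longrightarrow> y < dim_col A \<longrightarrow>
          A $$ (x,y) = (\<Sum>q=0..<r. fst fg x q * snd fg q y))"
      proof (cases "fst p < a1*k \<and> snd p < m*d2")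
        case True
        then have "cls (fst p) (snd p) \<in> {0..<N}//E" unfolding cls_def quotient_def using j0N by auto
        from block_factor[OF Ark[OF this]] obtain f g where
          "\<forall>x\<in>RS (cls (fst p) (snd p)). \<forall>y\<in>CS (cls (fst p) (snd p)). x < dim_row A \<longrightarrow> y < dim_col A \<longrightarrow>
            A $$ (x,y) = (\<Sum>q=0..<r. f x q * g q y)" by blast
        then show ?thesis by (intro exI[of _ "(f,g)"]) simp
      qed auto
    qed
    obtain FG where FG: "\<forall>p. fst p < a1*k \<longrightarrow> snd p < m*d2 \<longrightarrow>
       (\<forall>x\<in>RS (cls (fst p) (snd p)). \<forall>y\<in>CS (cls (fst p) (snd p)). x < dim_row A \<longrightarrow> y < dim_col A \<longrightarrow>
          A $$ (x,y) = (\<Sum>q=0..<r. fst (FG p) x q * snd (FG p) q y))"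
      using choice[OF ex] by blast
    define F where "F al d = fst (FG (al,d))" for al d
    define G where "G al d = snd (FG (al,d))" for al d
    have FGI: "A $$ (x,y) = (\<Sum>q=0..<r. F al d x q * G al d q y)"
      if "al < a1*k" "d < m*d2" "x \<in> RS (cls al d)" "y \<in> CS (cls al d)" "x < R1" "y < C2" for al d x y
      using FG[rule_format, of "(al,d)"] that AC unfolding F_def G_def by simp
    define jal where "jal j = j div (r*m*d2)" for j
    define jd where "jd j = j mod (m*d2)" for j
    define jq where "jq j = (j mod (r*m*d2)) div (m*d2)" for j
    define X1 where "X1 = mat R1 N (\<lambda>(x,j). if rel1 x j then F (jal j) (jd j) x (jq j) else 0)"
    define X2 where "X2 = mat N C2 (\<lambda>(j,y). if rel2 j y then G (jal j) (jd j) (jq j) y else 0)"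
    have X1f: "X1 \<in> factors \<pi>1" unfolding fac1 X1_def by auto
    have X2f: "X2 \<in> factors \<pi>2" unfolding fac2 X2_def by auto
    have "A = X1 * X2"
    proof (rule eq_matI)
      fix x y assume "x < dim_row (X1*X2)" "y < dim_col (X1*X2)"
      then have x: "x < R1" and y: "y < C2" by (simp_all add: X1_def X2_def)
      have prod: "(X1*X2) $$ (x,y) = (\<Sum>j=0..<N. X1 $$ (x,j) * X2 $$ (j,y))"
        using x y by (simp add: X1_def X2_def scalar_prod_def)
      have trm: "X1 $$ (x,j) * X2 $$ (j,y) = (if rel1 x j \<and> rel2 j y then F (jal j) (jd j) x (jq j) * G (jal j) (jd j) (jq j) y else 0)"
        if "j < N" for j
        using x y that by (simp add: X1_def X2_def)
      show "A $$ (x,y) = (X1*X2) $$ (x,y)"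
      proof (cases "relS x y")
        case False
        have "X1 $$ (x,j) * X2 $$ (j,y) = 0" if "j \<in> {0..<N}" for j
          using trm[of j] that arith_A1[of x b1 m d2 j r k y c2] False unfolding rel1_def rel2_def relS_def by auto
        then have "(\<Sum>j=0..<N. X1 $$ (x,j) * X2 $$ (j,y)) = 0" by (intro sum.neutral) blast
        then show ?thesis using prod AZ[OF x y False] by simp
      next
        case True
        define al where "al = y div (c2*d2)"
        define d where "d = x mod (m*d2)"
        define J where "J = {j. j < N \<and> rel1 x j \<and> rel2 j y}"
        define emb where "emb q = al*(r*m*d2) + q*(m*d2) + d" for q
        have al_lt: "al < a1*k"
        proof -
          have "y < (a1*k)*(c2*d2)" using y by (simp add: C2_def ac_simps)
          then show ?thesis unfolding al_def using pos by (simp add: div_less_iff_less_mult)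
        qed
        have d_lt: "d < m*d2" unfolding d_def using pos by simp
        have emb_rel: "rel1 x (emb q) \<and> rel2 (emb q) y" if "q < r" for q
          using arith_build[of r m d2 k c2 q x b1 y] pos that True
          unfolding emb_def al_def d_def rel1_def rel2_def relS_def by simp
        have emb_N: "emb q < N" if "q < r" for q
        proof -
          have "al*(r*(m*d2)) + q*(m*d2) + d < (a1*k)*(r*(m*d2))" using emb_lt[OF al_lt that d_lt] .
          then show ?thesis unfolding emb_def by (simp add: N_def ac_simps)
        qed
        have emb_q: "jq (emb q) = q" if "q < r" for q
          using arith_q_recover[OF that d_lt, of al] unfolding emb_def jq_def .
        have emb_J: "emb q \<in> J" if "q < r" for q using emb_rel[OF that] emb_N[OF that] unfolding J_def by simp
        have J_al: "jal j = al" and J_d: "jd j = d" if "j \<in> J" for j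
          using that unfolding J_def jal_def jd_def al_def d_def rel1_def rel2_def by auto
        have J_inv: "emb (jq j) = j" if "j \<in> J" for j
          using arith_decomp[of j r m d2] J_al[OF that] J_d[OF that]
          unfolding emb_def jal_def jd_def jq_def by simp
        have J_q: "jq j < r" if "j \<in> J" for j unfolding jq_def using arith_q_lt pos by simp
        have "(\<Sum>j=0..<N. X1 $$ (x,j) * X2 $$ (j,y)) = (\<Sum>j\<in>J. X1 $$ (x,j) * X2 $$ (j,y))"
        proof (rule sum.mono_neutral_right)
          show "finite {0..<N}" by simp
          show "J \<subseteq> {0..<N}" unfolding J_def by auto
          show "\<forall>j\<in>{0..<N} - J. X1 $$ (x,j) * X2 $$ (j,y) = 0"
            using trm unfolding J_def by auto
        qed
        also have "\<dots> = (\<Sum>q=0..<r. F al d x q * G al d q y)"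
        proof (rule sum.reindex_bij_witness[where i = emb and j = jq])
          fix j assume j: "j \<in> J"
          show "emb (jq j) = j" by (rule J_inv[OF j])
          show "jq j \<in> {0..<r}" using J_q[OF j] by simp
          have "j < N" "rel1 x j" "rel2 j y" using j unfolding J_def by auto
          then show "F al d x (jq j) * G al d (jq j) y = X1 $$ (x,j) * X2 $$ (j,y)"
            using trm J_al[OF j] J_d[OF j] by simp
        next
          fix q assume q: "q \<in> {0..<r}"
          show "jq (emb q) = q" using emb_q q by simp
          show "emb q \<in> J" using emb_J q by simp
        qed
        also have "\<dots> = A $$ (x,y)"
        proof -
          define j0 where "j0 = al*(r*m*d2) + d"
          have j0e: "j0 = emb 0" unfolding j0_def emb_def by simp
          have j0N: "j0 < N" using emb_N[of 0] pos j0e by simp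
          have "j0 \<in> cls al d" unfolding cls_def j0_def[symmetric] E_def using j0N by simp
          then have i0: "(SOME i. i \<in> cls al d) \<in> cls al d" by (rule someI)
          then have Ueq: "U (SOME i. i \<in> cls al d) = U j0" unfolding cls_def j0_def[symmetric] E_def by auto
          have "U j0 $$ (x,y) = 1" using UI[OF x y j0N] emb_rel[of 0] pos j0e by simp
          then have "(x,y) \<in> mat_support (U (SOME i. i \<in> cls al d))"
            unfolding Ueq mat_support_def using UC[of j0] x y by auto
          then have "x \<in> RS (cls al d)" "y \<in> CS (cls al d)" unfolding RS_def CS_def by force+
          then show ?thesis using FGI[OF al_lt d_lt _ _ x y] by simp
        qed
        finally show ?thesis using prod by simp
      qed
    qed (simp_all add: X1_def X2_def AC[THEN carrier_matD(1)] AC[THEN carrier_matD(2)])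
    then show "A \<in> butterfly_set \<pi>1 \<pi>2" unfolding butterfly_set_def using X1f X2f by blast
  qed
  have "butterfly_set \<pi>1 \<pi>2 = factors (star_pat \<pi>1 \<pi>2) \<inter> M_set \<pi>1 \<pi>2" using fwd bwd by blast
  then show ?thesis by (simp only: \<pi>1_def \<pi>2_def)
qed

theorem lemma4p13:
  assumes "is_pattern \<pi>1" and "is_pattern \<pi>2" and "chainable \<pi>1 \<pi>2"
  shows "butterfly_set \<pi>1 \<pi>2 = factors (star_pat \<pi>1 \<pi>2) \<inter> M_set \<pi>1 \<pi>2"
proof -
  obtain a1 b1 c1 d1 where p1: "\<pi>1 = (a1,b1,c1,d1)" by (cases \<pi>1) auto
  obtain a2 b2 c2 d2 where p2: "\<pi>2 = (a2,b2,c2,d2)" by (cases \<pi>2) auto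
  have pos1: "0<a1" "0<b1" "0<c1" "0<d1" using assms(1) unfolding p1 is_pattern_def by auto
  have pos2: "0<a2" "0<b2" "0<c2" "0<d2" using assms(2) unfolding p2 is_pattern_def by auto
  obtain r where r: "a1 * c1 = r * a2" "b2 * d2 = r * d1" and dv: "a1 dvd a2" "d2 dvd d1"
    using assms(3) unfolding p1 p2 chainable_def by auto
  obtain k where k: "a2 = a1 * k" using dv(1) by (auto simp: dvd_def)
  obtain m where m: "d1 = d2 * m" using dv(2) by (auto simp: dvd_def)
  have kpos: "0 < k" using pos2(1) k by simp
  have mpos: "0 < m" using pos1(4) m by simp
  have rpos: "0 < r" using r(1) pos1 by (metis mult_is_0 neq0_conv)
  have c1: "c1 = r * k"
  proof -
    have "a1 * c1 = a1 * (r * k)" using r(1) k by (simp add: ac_simps)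
    then show ?thesis using pos1(1) by simp
  qed
  have b2: "b2 = r * m"
  proof -
    have "b2 * d2 = (r * m) * d2" using r(2) m by (simp add: ac_simps)
    then show ?thesis using pos2(4) by simp
  qed
  have e1: "\<pi>1 = (a1, b1, r*k, m*d2)" using p1 c1 m by (simp add: ac_simps)
  have e2: "\<pi>2 = (a1*k, r*m, c2, d2)" using p2 k b2 by simp
  show ?thesis unfolding e1 e2 by (rule main_sub) (use pos1 pos2 kpos mpos rpos in auto)
qed

end
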